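(* Let $R$ be a commutative ring and let $x\in R[[t]]$ admit a strict Weierstrass factorization. Then for every ring homomorphism $R\to R'$, the canonical map $$(R[[t]]/(x))\otimes_R R'\to R'[[t]]/(x)$$ is an isomorphism, where on the right $x$ denotes the image of $x$ in $R'[[t]]$.
   Context: A strict Weierstrass factorization of $x\in R[[t]]$ is an expression $x=uq$ with $u\in R[[t]]^\times$ and $q\in R[t]$ a monic polynomial such that $t^n\in qR[[t]]$ for some $n\in\mathbb{N}$. $(x)$ denotes the ideal generated by $x$. *)

theory Defs
  imports "HOL-Computational_Algebra.Computational_Algebra"
begin

definition is_ring_hom :: "('a::comm_ring_1 \<Rightarrow> 'b::comm_ring_1) \<Rightarrow> bool" where
  "is_ring_hom h \<longleftrightarrow> h 1 = 1 \<and> (\<forall>a b. h (a + b) = h a + h b) \<and> (\<forall>a b. h (a * b) = h a * h b)"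

definition fps_map :: "('a \<Rightarrow> 'b) \<Rightarrow> 'a fps \<Rightarrow> 'b fps" where
  "fps_map h f = Abs_fps (\<lambda>n. h (fps_nth f n))"

definition strict_weierstrass_factorization :: "'a::comm_ring_1 fps \<Rightarrow> 'a fps \<Rightarrow> 'a poly \<Rightarrow> bool" where
  "strict_weierstrass_factorization x u q \<longleftrightarrow>
     u dvd 1 \<and> lead_coeff q = 1 \<and> x = u * fps_of_poly q \<and> (\<exists>n. fps_of_poly q dvd fps_X ^ n)"

definition has_strict_weierstrass_factorization :: "'a::comm_ring_1 fps \<Rightarrow> bool" where
  "has_strict_weierstrass_factorization x \<longleftrightarrow> (\<exists>u q. strict_weierstrass_factorization x u q)"

text \<open>A = R[[t]]/(x) (elements represented by power series
  modulo x), B = R'[[t]]/(x') with x' = fps_map h x.  The canonical R-bilinear map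
  A \<times> R' \<rightarrow> B is  ([f], r) \<mapsto> [r \<cdot> h(f)].  The canonical map A \<otimes>_R R' \<rightarrow> B is an
  isomorphism iff this bilinear map has the universal property of the tensor product:
  for every R-module M (with scalar multiplication s) and every R-bilinear map
  g : A \<times> R' \<rightarrow> M there is a unique R-linear map \<phi> : B \<rightarrow> M with
  \<phi>([r \<cdot> h(f)]) = g([f], r).  Maps out of quotients are represented by maps on
  representatives that are constant on residue classes.\<close>

definition R_bilinear_on_quot ::
  "('a::comm_ring_1 \<Rightarrow> 'b::comm_ring_1) \<Rightarrow> 'a fps \<Rightarrow> ('a \<Rightarrow> 'm::ab_group_add \<Rightarrow> 'm)
    \<Rightarrow> ('a fps \<Rightarrow> 'b \<Rightarrow> 'm) \<Rightarrow> bool" where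
  "R_bilinear_on_quot h x s g \<longleftrightarrow>
     (\<forall>f f' r. x dvd (f - f') \<longrightarrow> g f r = g f' r) \<and>
     (\<forall>f f' r. g (f + f') r = g f r + g f' r) \<and>
     (\<forall>f r r'. g f (r + r') = g f r + g f r') \<and>
     (\<forall>c f r. g (fps_const c * f) r = s c (g f r)) \<and>
     (\<forall>c f r. g f (h c * r) = s c (g f r))"

definition R_linear_on_quot ::
  "('a::comm_ring_1 \<Rightarrow> 'b::comm_ring_1) \<Rightarrow> 'b fps \<Rightarrow> ('a \<Rightarrow> 'm::ab_group_add \<Rightarrow> 'm)
    \<Rightarrow> ('b fps \<Rightarrow> 'm) \<Rightarrow> bool" where
  "R_linear_on_quot h x' s \<phi> \<longleftrightarrow>
     (\<forall>g g'. x' dvd (g - g') \<longrightarrow> \<phi> g = \<phi> g') \<and>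
     (\<forall>g g'. \<phi> (g + g') = \<phi> g + \<phi> g') \<and>
     (\<forall>c g. \<phi> (fps_const (h c) * g) = s c (\<phi> g))"

definition canonical_base_change_iso :: "('a::comm_ring_1 \<Rightarrow> 'b::comm_ring_1) \<Rightarrow> 'a fps
    \<Rightarrow> ('a \<Rightarrow> 'm::ab_group_add \<Rightarrow> 'm) \<Rightarrow> bool" where
  "canonical_base_change_iso h x s \<longleftrightarrow>
     (\<forall>g. R_bilinear_on_quot h x s g \<longrightarrow>
        (\<exists>!\<phi>. R_linear_on_quot h (fps_map h x) s \<phi> \<and>
               (\<forall>f r. \<phi> (fps_const r * fps_map h f) = g f r)))"

end

theory Submission
  imports Defs
begin

lemma rh_zero: "is_ring_hom h \<Longrightarrow> h 0 = 0"
  unfolding is_ring_hom_def by (metis add_cancel_left_right add_0)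

lemma rh_sum: "is_ring_hom h \<Longrightarrow> h (sum f A) = (\<Sum>i\<in>A. h (f i))"
  by (induction A rule: infinite_finite_induct) (auto simp: rh_zero is_ring_hom_def)

lemma fps_map_mult: "is_ring_hom h \<Longrightarrow> fps_map h (f * g) = fps_map h f * fps_map h g"
  unfolding fps_map_def
  by (rule fps_ext) (simp add: fps_mult_nth rh_sum, simp add: is_ring_hom_def)

lemma fps_map_X_power: "is_ring_hom h \<Longrightarrow> fps_map h (fps_X ^ k) = fps_X ^ k"
  unfolding fps_map_def by (rule fps_ext) (simp add: rh_zero, simp add: is_ring_hom_def)

lemma cutoff_dvd: "fps_X ^ n dvd ((f::'a::comm_ring_1 fps) - fps_cutoff n f)"
proof -
  have "f - fps_cutoff n f = fps_X ^ n * fps_shift n f"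
    by (rule fps_ext) (simp add: fps_X_power_mult_nth)
  then show ?thesis by simp
qed

lemma cutoff_sum: "fps_cutoff N (f::'a::comm_ring_1 fps) = (\<Sum>i<N. fps_const (f $ i) * fps_X ^ i)"
proof (rule fps_ext)
  fix n
  have "(\<Sum>i<N. fps_const (f $ i) * fps_X ^ i) $ n = (\<Sum>i<N. (if n = i then f $ i else 0))"
    by (simp add: fps_sum_nth if_distrib cong: if_cong)
  also have "\<dots> = (if n < N then f $ n else 0)"
    by (simp add: sum.delta)
  finally show "fps_cutoff N f $ n = (\<Sum>i<N. fps_const (f $ i) * fps_X ^ i) $ n" by simp
qed

lemma xpow_dvd_nth: "fps_X ^ N dvd (D::'a::comm_ring_1 fps) \<Longrightarrow> i < N \<Longrightarrow> D $ i = 0"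
  by (auto simp: fps_X_power_mult_nth)

lemma fps_map_nth [simp]: "fps_map h f $ n = h (f $ n)"
  by (simp add: fps_map_def)

lemma fps_map_dvd: "is_ring_hom h \<Longrightarrow> a dvd b \<Longrightarrow> fps_map h a dvd fps_map h b"
  by (auto simp: fps_map_mult elim!: dvdE)

context
  fixes h :: "'a::comm_ring_1 \<Rightarrow> 'b::comm_ring_1" and x :: "'a fps"
    and s :: "'a \<Rightarrow> 'm::ab_group_add \<Rightarrow> 'm" and g :: "'a fps \<Rightarrow> 'b \<Rightarrow> 'm" and N :: nat
  assumes hom: "is_ring_hom h" and md: "module s" and bil: "R_bilinear_on_quot h x s g"
    and xN: "x dvd fps_X ^ N"
begin

definition psi :: "'b fps \<Rightarrow> 'm" where "psi G = (\<Sum>i<N. g (fps_X ^ i) (G $ i))"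

lemma g_wd: "x dvd (f - f') \<Longrightarrow> g f r = g f' r"
  using bil unfolding R_bilinear_on_quot_def by blast

lemma g_add: "g (f + f') r = g f r + g f' r"
  using bil unfolding R_bilinear_on_quot_def by blast

lemma g_add2: "g f (r + r') = g f r + g f r'"
  using bil unfolding R_bilinear_on_quot_def by blast

lemma g_sc1: "g (fps_const c * f) r = s c (g f r)"
  using bil unfolding R_bilinear_on_quot_def by blast

lemma g_sc2: "g f (h c * r) = s c (g f r)"
  using bil unfolding R_bilinear_on_quot_def by blast

lemma g0: "g 0 r = 0"
  using g_add[of 0 0 r] by simp

lemma g_sum: "g (sum f A) r = (\<Sum>i\<in>A. g (f i) r)"
  by (induction A rule: infinite_finite_induct) (auto simp: g0 g_add)

lemma g_cut: "g f r = g (fps_cutoff N f) r"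
  by (rule g_wd) (rule dvd_trans[OF xN cutoff_dvd])

lemma psi_map: "psi (fps_const r * fps_map h f) = g f r"
proof -
  have "psi (fps_const r * fps_map h f) = (\<Sum>i<N. g (fps_X ^ i) (h (f $ i) * r))"
    unfolding psi_def by (simp add: mult.commute)
  also have "\<dots> = (\<Sum>i<N. g (fps_const (f $ i) * fps_X ^ i) r)"
    by (simp add: g_sc1 g_sc2)
  also have "\<dots> = g (fps_cutoff N f) r"
    by (simp add: cutoff_sum g_sum)
  also have "\<dots> = g f r" by (simp add: g_cut[symmetric])
  finally show ?thesis .
qed

lemma psi_add: "psi (G + G') = psi G + psi G'"
  unfolding psi_def by (simp add: g_add2 sum.distrib)

lemma psi0: "psi 0 = 0"
  using psi_add[of 0 0] by simp

lemma psi_sum: "psi (sum f A) = (\<Sum>i\<in>A. psi (f i))"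
  by (induction A rule: infinite_finite_induct) (auto simp: psi0 psi_add)

lemma psi_scale: "psi (fps_const (h c) * G) = s c (psi G)"
  unfolding psi_def by (simp add: g_sc2 module.scale_sum_right[OF md])

lemma psi_wd:
  assumes "fps_map h x dvd (G - G')"
  shows "psi G = psi G'"
proof -
  obtain H where H: "G - G' = fps_map h x * H" using assms by (elim dvdE)
  have G: "G = G' + fps_map h x * H" using H by (simp add: algebra_simps)
  have "psi (fps_map h x * H) = psi (fps_map h x * fps_cutoff N H)"
    unfolding psi_def by (intro sum.cong refl) (simp add: fps_cutoff_right_mult_nth)
  also have "fps_map h x * fps_cutoff N H
      = (\<Sum>k<N. fps_const (H $ k) * fps_map h (x * fps_X ^ k))"
    by (simp add: cutoff_sum sum_distrib_left fps_map_mult[OF hom] fps_map_X_power[OF hom]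
        algebra_simps)
  also have "psi \<dots> = (\<Sum>k<N. g (x * fps_X ^ k) (H $ k))"
    by (simp add: psi_sum psi_map)
  also have "\<dots> = (\<Sum>k<N. g 0 (H $ k))"
    by (intro sum.cong refl g_wd) simp
  also have "\<dots> = 0" by (simp add: g0)
  finally show ?thesis using G by (simp add: psi_add)
qed

lemma psi_lin: "R_linear_on_quot h (fps_map h x) s psi"
  unfolding R_linear_on_quot_def using psi_wd psi_add psi_scale by blast

lemma psi_unique:
  assumes lin: "R_linear_on_quot h (fps_map h x) s \<phi>"
    and eq: "\<And>f r. \<phi> (fps_const r * fps_map h f) = g f r"
  shows "\<phi> G = psi G"
proof -
  have wd: "fps_map h x dvd (G1 - G2) \<Longrightarrow> \<phi> G1 = \<phi> G2" for G1 G2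
    using lin unfolding R_linear_on_quot_def by blast
  have add: "\<phi> (G1 + G2) = \<phi> G1 + \<phi> G2" for G1 G2
    using lin unfolding R_linear_on_quot_def by blast
  have z: "\<phi> 0 = 0" using add[of 0 0] by simp
  have sm: "\<phi> (sum f A) = (\<Sum>i\<in>A. \<phi> (f i))" for f and A :: "nat set"
    by (induction A rule: infinite_finite_induct) (auto simp: z add)
  have xN': "fps_map h x dvd fps_X ^ N"
    using fps_map_dvd[OF hom xN] by (simp add: fps_map_X_power[OF hom])
  have "\<phi> G = \<phi> (fps_cutoff N G)"
    by (rule wd) (rule dvd_trans[OF xN' cutoff_dvd])
  also have "\<dots> = (\<Sum>i<N. \<phi> (fps_const (G $ i) * fps_map h (fps_X ^ i)))"
    by (simp add: cutoff_sum sm fps_map_X_power[OF hom])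
  also have "\<dots> = psi G" unfolding psi_def by (simp add: eq)
  finally show ?thesis .
qed

end

theorem corollary3p4:
  fixes h :: "'a::comm_ring_1 \<Rightarrow> 'b::comm_ring_1"
    and x :: "'a fps"
    and s :: "'a \<Rightarrow> 'm::ab_group_add \<Rightarrow> 'm"
  assumes "is_ring_hom h"
    and "has_strict_weierstrass_factorization x"
    and "module s"
  shows "canonical_base_change_iso h x s"
proof -
  obtain u q n where u: "u dvd 1" and xq: "x = u * fps_of_poly q"
    and qn: "fps_of_poly q dvd fps_X ^ n"
    using assms(2) unfolding has_strict_weierstrass_factorization_def
      strict_weierstrass_factorization_def by blast
  have xN: "x dvd fps_X ^ n"
  proof -
    obtain v where v: "1 = u * v" using u by (elim dvdE)
    have "fps_of_poly q = x * v" using v xq by (metis mult.assoc mult.commute mult_1_left)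
    then have "x dvd fps_of_poly q" by simp
    then show ?thesis using qn by (rule dvd_trans)
  qed
  show ?thesis
    unfolding canonical_base_change_iso_def
  proof (intro allI impI)
    fix g assume bil: "R_bilinear_on_quot h x s g"
    show "\<exists>!\<phi>. R_linear_on_quot h (fps_map h x) s \<phi> \<and>
               (\<forall>f r. \<phi> (fps_const r * fps_map h f) = g f r)"
    proof (rule ex1I[of _ "psi g n"])
      show "R_linear_on_quot h (fps_map h x) s (psi g n) \<and>
               (\<forall>f r. psi g n (fps_const r * fps_map h f) = g f r)"
        using psi_lin[OF assms(1) assms(3) bil xN] psi_map[OF assms(1) assms(3) bil xN] by blast
    next
      fix \<phi> assume "R_linear_on_quot h (fps_map h x) s \<phi> \<and>
               (\<forall>f r. \<phi> (fps_const r * fps_map h f) = g f r)"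
      then show "\<phi> = psi g n"
        using psi_unique[OF assms(1) assms(3) bil xN] by blast
    qed
  qed
qed

end
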